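(* For all closed terms $t_0,t_0'$, if $t_0\to t_0'$ then $t_0\approx_{\emptyset}t_0'$.
   Context: Terms of $\lambda_S$: $t ::= x \mid \lambda x.t \mid t\,t \mid \mathcal{S}k.t \mid \langle t\rangle$ (shift binds $k$; $\langle\cdot\rangle$ reset), up to $\alpha$-conversion. Values $v::=\lambda x.t$. Pure contexts $E ::= \Box \mid v\,E \mid E\,t$; evaluation contexts $F ::= \Box \mid v\,F \mid F\,t \mid \langle F\rangle$. Reduction: $F[(\lambda x.t)v]\to F[t\{v/x\}]$; $F[\langle E[\mathcal Sk.t]\rangle]\to F[\langle t\{\lambda x.\langle E[x]\rangle/k\}\rangle]$ ($x\notin\mathrm{fv}(E)$); $F[\langle v\rangle]\to F[v]$; $\to^*$ reflexive-transitive closure. Stuck: not a value and irreducible; normal form: value or stuck. Closures: for $R$ a relation on closed terms, $\widetilde R$ is the smallest relation containing $R$, all $(x,x)$, closed under all term constructors, restricted to closed terms; $\widehat R$ is the smallest relation on closed evaluation contexts with $\Box\widehat R\Box$, $v_0F_0\widehat Rv_1F_1$ if $F_0\widehat RF_1,v_0\widetilde Rv_1$; $F_0t_0\widehat RF_1t_1$ if $F_0\widehat RF_1,t_0\widetilde Rt_1$; $\langle F_0\rangle\widehat R\langle F_1\rangle$ if $F_0\widehat RF_1$. An environment $\mathcal E$ is a relation on closed normal forms relating values only with values and stuck terms only with stuck terms; an environmental relation $\mathcal X$ is a set of environments and triples $(\mathcal E,t_0,t_1)$ with $t_0,t_1$ closed, written $t_0\mathcal X_{\mathcal E}t_1$.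 $\mathcal X$ is an environmental bisimulation if (1) whenever $t_0\mathcal X_{\mathcal E}t_1$: (a) $t_0\to t_0'$ implies $t_1\to^*t_1'$ with $t_0'\mathcal X_{\mathcal E}t_1'$; (b) if $t_0$ is a value $v_0$ then $t_1\to^*v_1$ with $\mathcal E\cup\{(v_0,v_1)\}\in\mathcal X$; (c) if $t_0$ is stuck then $t_1\to^*t_1'$ stuck with $\mathcal E\cup\{(t_0,t_1')\}\in\mathcal X$; (d) symmetric conditions; (2) whenever $\mathcal E\in\mathcal X$: (a) $(\lambda x.t_0)\mathcal E(\lambda x.t_1)$, $v_0\widetilde{\mathcal E}v_1$ imply $t_0\{v_0/x\}\mathcal X_{\mathcal E}t_1\{v_1/x\}$; (b) $E_0[\mathcal Sk.t_0]\mathcal EE_1[\mathcal Sk.t_1]$, pure $E_0'\widehat{\mathcal E}E_1'$ imply $\langle t_0\{\lambda x.\langle E_0'[E_0[x]]\rangle/k\}\rangle\mathcal X_{\mathcal E}\langle t_1\{\lambda x.\langle E_1'[E_1[x]]\rangle/k\}\rangle$ ($x$ fresh). $\approx$ is the largest environmental bisimulation; $t_0\approx_{\emptyset}t_1$ means $(\emptyset,t_0,t_1)\in\approx$. *)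

theory Defs
  imports Main
begin

section \<open>Terms of lambda_S (de Bruijn indices: terms up to alpha-conversion)\<close>

text \<open>Lam t binds index 0 in t; Shift t binds the continuation variable k as index 0 in t.\<close>
datatype trm = Var nat | Lam trm | App trm trm | Shift trm | Reset trm

fun lift :: "nat \<Rightarrow> trm \<Rightarrow> trm" where
  "lift k (Var n) = (if n < k then Var n else Var (Suc n))"
| "lift k (Lam t) = Lam (lift (Suc k) t)"
| "lift k (App a b) = App (lift k a) (lift k b)"
| "lift k (Shift t) = Shift (lift (Suc k) t)"
| "lift k (Reset t) = Reset (lift k t)"

text \<open>subst t k s = t{s/k}, where variables above k are decremented (binder removed).\<close>
fun subst :: "trm \<Rightarrow> nat \<Rightarrow> trm \<Rightarrow> trm" where
  "subst (Var n) k s = (if n < k then Var n else if n = k then s else Var (n - 1))"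
| "subst (Lam t) k s = Lam (subst t (Suc k) (lift 0 s))"
| "subst (App a b) k s = App (subst a k s) (subst b k s)"
| "subst (Shift t) k s = Shift (subst t (Suc k) (lift 0 s))"
| "subst (Reset t) k s = Reset (subst t k s)"

fun closed_at :: "nat \<Rightarrow> trm \<Rightarrow> bool" where
  "closed_at k (Var n) = (n < k)"
| "closed_at k (Lam t) = closed_at (Suc k) t"
| "closed_at k (App a b) = (closed_at k a \<and> closed_at k b)"
| "closed_at k (Shift t) = closed_at (Suc k) t"
| "closed_at k (Reset t) = closed_at k t"

definition closed :: "trm \<Rightarrow> bool" where
  "closed t = closed_at 0 t"

fun is_value :: "trm \<Rightarrow> bool" where
  "is_value (Lam t) = True"
| "is_value _ = False"

datatype ctx = Hole | CAppR trm ctx | CAppL ctx trm | CReset ctx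

fun plug :: "ctx \<Rightarrow> trm \<Rightarrow> trm" where
  "plug Hole u = u"
| "plug (CAppR v E) u = App v (plug E u)"
| "plug (CAppL E t) u = App (plug E u) t"
| "plug (CReset E) u = Reset (plug E u)"

fun liftc :: "nat \<Rightarrow> ctx \<Rightarrow> ctx" where
  "liftc k Hole = Hole"
| "liftc k (CAppR v E) = CAppR (lift k v) (liftc k E)"
| "liftc k (CAppL E t) = CAppL (liftc k E) (lift k t)"
| "liftc k (CReset E) = CReset (liftc k E)"

fun is_pure :: "ctx \<Rightarrow> bool" where
  "is_pure Hole = True"
| "is_pure (CAppR v E) = (is_value v \<and> is_pure E)"
| "is_pure (CAppL E t) = is_pure E"
| "is_pure (CReset E) = False"

fun is_ectx :: "ctx \<Rightarrow> bool" where
  "is_ectx Hole = True"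
| "is_ectx (CAppR v E) = (is_value v \<and> is_ectx E)"
| "is_ectx (CAppL E t) = is_ectx E"
| "is_ectx (CReset E) = is_ectx E"

fun closed_ctx :: "ctx \<Rightarrow> bool" where
  "closed_ctx Hole = True"
| "closed_ctx (CAppR v E) = (closed v \<and> closed_ctx E)"
| "closed_ctx (CAppL E t) = (closed_ctx E \<and> closed t)"
| "closed_ctx (CReset E) = closed_ctx E"

inductive step :: "trm \<Rightarrow> trm \<Rightarrow> bool" where
  beta: "\<lbrakk>is_ectx F; is_value v\<rbrakk> \<Longrightarrow>
          step (plug F (App (Lam t) v)) (plug F (subst t 0 v))"
| shift: "\<lbrakk>is_ectx F; is_pure E\<rbrakk> \<Longrightarrow>
          step (plug F (Reset (plug E (Shift t))))
               (plug F (Reset (subst t 0 (Lam (Reset (plug (liftc 0 E) (Var 0)))))))"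
| reset: "\<lbrakk>is_ectx F; is_value v\<rbrakk> \<Longrightarrow> step (plug F (Reset v)) (plug F v)"

abbreviation steps :: "trm \<Rightarrow> trm \<Rightarrow> bool" where
  "steps \<equiv> step\<^sup>*\<^sup>*"

definition stuck :: "trm \<Rightarrow> bool" where
  "stuck t \<longleftrightarrow> \<not> is_value t \<and> (\<nexists>t'. step t t')"

definition normal_form :: "trm \<Rightarrow> bool" where
  "normal_form t \<longleftrightarrow> is_value t \<or> stuck t"

inductive tclo :: "(trm \<times> trm) set \<Rightarrow> trm \<Rightarrow> trm \<Rightarrow> bool" for R where
  base: "(a, b) \<in> R \<Longrightarrow> tclo R a b"
| var: "tclo R (Var n) (Var n)"
| lam: "tclo R a b \<Longrightarrow> tclo R (Lam a) (Lam b)"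
| app: "tclo R a b \<Longrightarrow> tclo R c d \<Longrightarrow> tclo R (App a c) (App b d)"
| shft: "tclo R a b \<Longrightarrow> tclo R (Shift a) (Shift b)"
| rst: "tclo R a b \<Longrightarrow> tclo R (Reset a) (Reset b)"

definition tilde :: "(trm \<times> trm) set \<Rightarrow> (trm \<times> trm) set" where
  "tilde R = {(a, b). tclo R a b \<and> closed a \<and> closed b}"

inductive hclo :: "(trm \<times> trm) set \<Rightarrow> ctx \<Rightarrow> ctx \<Rightarrow> bool" for R where
  hole: "hclo R Hole Hole"
| appr: "\<lbrakk>hclo R F0 F1; (v0, v1) \<in> tilde R; is_value v0; is_value v1\<rbrakk>
          \<Longrightarrow> hclo R (CAppR v0 F0) (CAppR v1 F1)"
| appl: "\<lbrakk>hclo R F0 F1; (t0, t1) \<in> tilde R\<rbrakk> \<Longrightarrow> hclo R (CAppL F0 t0) (CAppL F1 t1)"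
| rst: "hclo R F0 F1 \<Longrightarrow> hclo R (CReset F0) (CReset F1)"

definition hat :: "(trm \<times> trm) set \<Rightarrow> (ctx \<times> ctx) set" where
  "hat R = {(F0, F1). hclo R F0 F1 \<and> is_ectx F0 \<and> is_ectx F1
                      \<and> closed_ctx F0 \<and> closed_ctx F1}"

definition is_env :: "(trm \<times> trm) set \<Rightarrow> bool" where
  "is_env E \<longleftrightarrow> (\<forall>(a, b) \<in> E. closed a \<and> closed b \<and>
       ((is_value a \<and> is_value b) \<or> (stuck a \<and> stuck b)))"

text \<open>An environmental relation is represented by its set of environments Es
  together with its set of triples T.\<close>
definition env_relation :: "(trm \<times> trm) set set \<Rightarrow> ((trm \<times> trm) set \<times> trm \<times> trm) set \<Rightarrow> bool" where
  "env_relation Es T \<longleftrightarrow> (\<forall>E \<in> Es. is_env E) \<and>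
      (\<forall>(E, t0, t1) \<in> T. is_env E \<and> closed t0 \<and> closed t1)"

definition cont :: "ctx \<Rightarrow> ctx \<Rightarrow> trm" where
  "cont E' E = Lam (Reset (plug (liftc 0 E') (plug (liftc 0 E) (Var 0))))"

definition env_bisim :: "(trm \<times> trm) set set \<Rightarrow> ((trm \<times> trm) set \<times> trm \<times> trm) set \<Rightarrow> bool" where
  "env_bisim Es T \<longleftrightarrow> env_relation Es T \<and>
     (\<forall>(E, t0, t1) \<in> T.
        (\<forall>t0'. step t0 t0' \<longrightarrow> (\<exists>t1'. steps t1 t1' \<and> (E, t0', t1') \<in> T)) \<and>
        (is_value t0 \<longrightarrow> (\<exists>v1. steps t1 v1 \<and> is_value v1 \<and> insert (t0, v1) E \<in> Es)) \<and>
        (stuck t0 \<longrightarrow> (\<exists>t1'. steps t1 t1' \<and> stuck t1' \<and> insert (t0, t1') E \<in> Es)) \<and>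
        (\<forall>t1'. step t1 t1' \<longrightarrow> (\<exists>t0'. steps t0 t0' \<and> (E, t0', t1') \<in> T)) \<and>
        (is_value t1 \<longrightarrow> (\<exists>v0. steps t0 v0 \<and> is_value v0 \<and> insert (v0, t1) E \<in> Es)) \<and>
        (stuck t1 \<longrightarrow> (\<exists>t0'. steps t0 t0' \<and> stuck t0' \<and> insert (t0', t1) E \<in> Es))) \<and>
     (\<forall>E \<in> Es.
        (\<forall>t0 t1 v0 v1. (Lam t0, Lam t1) \<in> E \<longrightarrow> (v0, v1) \<in> tilde E \<longrightarrow>
            is_value v0 \<longrightarrow> is_value v1 \<longrightarrow> (E, subst t0 0 v0, subst t1 0 v1) \<in> T) \<and>
        (\<forall>E0 E1 t0 t1 E0' E1'. is_pure E0 \<longrightarrow> is_pure E1 \<longrightarrow>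
            (plug E0 (Shift t0), plug E1 (Shift t1)) \<in> E \<longrightarrow>
            is_pure E0' \<longrightarrow> is_pure E1' \<longrightarrow> (E0', E1') \<in> hat E \<longrightarrow>
            (E, Reset (subst t0 0 (cont E0' E0)), Reset (subst t1 0 (cont E1' E1))) \<in> T))"

text \<open>The largest environmental bisimulation: union of all of them (componentwise).
  Its triple component:\<close>
definition approx_triples :: "((trm \<times> trm) set \<times> trm \<times> trm) set" where
  "approx_triples = \<Union>{T. \<exists>Es. env_bisim Es T}"

definition approx_empty :: "trm \<Rightarrow> trm \<Rightarrow> bool" where
  "approx_empty t0 t1 \<longleftrightarrow> ({}, t0, t1) \<in> approx_triples"

end

theory Submission
  imports Defs
begin

definition redex :: "trm \<Rightarrow> bool" where
  "redex r \<longleftrightarrow> (\<exists>t v. r = App (Lam t) v \<and> is_value v) \<or>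
     (\<exists>E t. is_pure E \<and> r = Reset (plug E (Shift t))) \<or> (\<exists>v. is_value v \<and> r = Reset v)"

lemma val_plug[simp]: "is_value (plug F r) \<longleftrightarrow> F = Hole \<and> is_value r"
  by (cases F) auto

lemma plug_Lam[simp]: "plug F r = Lam t \<longleftrightarrow> F = Hole \<and> r = Lam t"
  by (cases F) auto

lemma redex_not_value: "redex r \<Longrightarrow> \<not> is_value r"
  unfolding redex_def by auto

lemma shift_not_redex:
  "is_pure E \<Longrightarrow> is_ectx F \<Longrightarrow> redex r \<Longrightarrow> plug E (Shift t) \<noteq> plug F r"
proof (induction E arbitrary: F)
  case Hole then show ?case by (cases F) (auto simp: redex_def)
next
  case (CAppR v E) then show ?case
    by (cases F) (auto simp: redex_def dest: redex_not_value)
next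
  case (CAppL E s) then show ?case
    by (cases F) (auto simp: redex_def dest: redex_not_value)
next
  case (CReset E) then show ?case by simp
qed

lemma pure_unique:
  "is_pure E1 \<Longrightarrow> is_pure E2 \<Longrightarrow> plug E1 (Shift t1) = plug E2 (Shift t2) \<Longrightarrow> E1 = E2 \<and> t1 = t2"
proof (induction E1 arbitrary: E2)
  case Hole then show ?case by (cases E2) auto
next
  case (CAppR v E) then show ?case by (cases E2) auto
next
  case (CAppL E s) then show ?case by (cases E2) auto
next
  case (CReset E) then show ?case by simp
qed

lemma unique_decomp:
  "is_ectx F1 \<Longrightarrow> is_ectx F2 \<Longrightarrow> redex r1 \<Longrightarrow> redex r2 \<Longrightarrow> plug F1 r1 = plug F2 r2
   \<Longrightarrow> F1 = F2 \<and> r1 = r2"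
proof (induction F1 arbitrary: F2)
  case Hole
  show ?case
  proof (cases F2)
    case Hole then show ?thesis using Hole.prems by simp
  next
    case (CAppR w F')
    then show ?thesis using Hole.prems redex_not_value[of r2]
      by (auto simp: redex_def)
  next
    case (CAppL F' s)
    then show ?thesis using Hole.prems redex_not_value[of r2]
      by (auto simp: redex_def)
  next
    case (CReset F')
    have "\<not> (\<exists>E t. is_pure E \<and> r1 = Reset (plug E (Shift t)))"
      using Hole.prems CReset shift_not_redex by (metis is_ectx.simps(4) plug.simps(1,4) trm.inject(5))
    then show ?thesis using CReset Hole.prems redex_not_value[of r2]
      by (auto simp: redex_def)
  qed
next
  case (CAppR v F)
  show ?case
  proof (cases F2)
    case Hole then show ?thesis using CAppR.prems redex_not_value[of r1]
      by (auto simp: redex_def)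
  next
    case (CAppR w F')
    then show ?thesis using CAppR.prems CAppR.IH by auto
  next
    case (CAppL F' s)
    then show ?thesis using CAppR.prems redex_not_value[of r2] by auto
  next
    case (CReset F')
    then show ?thesis using CAppR.prems by auto
  qed
next
  case (CAppL F s)
  show ?case
  proof (cases F2)
    case Hole then show ?thesis using CAppL.prems redex_not_value[of r1]
      by (auto simp: redex_def)
  next
    case (CAppR w F')
    then show ?thesis using CAppL.prems redex_not_value[of r1] by auto
  next
    case (CAppL F' s')
    then show ?thesis using CAppL.prems CAppL.IH by auto
  next
    case (CReset F')
    then show ?thesis using CAppL.prems by auto
  qed
next
  case (CReset F)
  show ?case
  proof (cases F2)
    case Hole
    have "\<not> (\<exists>E t. is_pure E \<and> r2 = Reset (plug E (Shift t)))"
      using CReset.prems Hole shift_not_redex by (metis is_ectx.simps(4) plug.simps(1,4) trm.inject(5))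
    then show ?thesis using Hole CReset.prems redex_not_value[of r1]
      by (auto simp: redex_def)
  next
    case (CAppR w F')
    then show ?thesis using CReset.prems by auto
  next
    case (CAppL F' s')
    then show ?thesis using CReset.prems by auto
  next
    case (CReset F')
    then show ?thesis using CReset.prems CReset.IH by auto
  qed
qed

lemma step_redex:
  "step a b \<Longrightarrow> \<exists>F r. is_ectx F \<and> redex r \<and> a = plug F r"
  unfolding redex_def by (induction rule: step.induct) blast+

lemma value_no_step: "is_value a \<Longrightarrow> \<not> step a b"
  using step_redex redex_not_value by fastforce

lemma det: "step a b \<Longrightarrow> step a c \<Longrightarrow> b = c"
proof (induction rule: step.induct)
  case (beta F v t)
  from beta.prems show ?case
  proof cases
    case (beta F' v' t')
    have "F = F' \<and> App (Lam t) v = App (Lam t') v'"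
      using unique_decomp[of F F' "App (Lam t) v" "App (Lam t') v'"] beta beta.hyps
      by (auto simp: redex_def)
    then show ?thesis using beta by auto
  next
    case (shift F' E t')
    have "F = F' \<and> App (Lam t) v = Reset (plug E (Shift t'))"
      using unique_decomp[of F F' "App (Lam t) v" "Reset (plug E (Shift t'))"] shift beta.hyps
      by (auto simp: redex_def)
    then show ?thesis by auto
  next
    case (reset F' v')
    have "F = F' \<and> App (Lam t) v = Reset v'"
      using unique_decomp[of F F' "App (Lam t) v" "Reset v'"] reset beta.hyps
      by (auto simp: redex_def)
    then show ?thesis by auto
  qed
next
  case (shift F E t)
  from shift.prems show ?case
  proof cases
    case (beta F' v' t')
    have "F = F' \<and> Reset (plug E (Shift t)) = App (Lam t') v'"
      using unique_decomp[of F F' "Reset (plug E (Shift t))" "App (Lam t') v'"] beta shift.hyps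
      by (auto simp: redex_def)
    then show ?thesis by auto
  next
    case (shift F' E' t')
    have "F = F' \<and> Reset (plug E (Shift t)) = Reset (plug E' (Shift t'))"
      using unique_decomp[of F F' "Reset (plug E (Shift t))" "Reset (plug E' (Shift t'))"] shift shift.hyps
      by (auto simp: redex_def)
    then show ?thesis using pure_unique[of E E' t t'] shift shift.hyps by auto
  next
    case (reset F' v')
    have "F = F' \<and> Reset (plug E (Shift t)) = Reset v'"
      using unique_decomp[of F F' "Reset (plug E (Shift t))" "Reset v'"] reset shift.hyps
      by (auto simp: redex_def)
    then show ?thesis using reset by auto
  qed
next
  case (reset F v)
  from reset.prems show ?case
  proof cases
    case (beta F' v' t')
    have "F = F' \<and> Reset v = App (Lam t') v'"
      using unique_decomp[of F F' "Reset v" "App (Lam t') v'"] beta reset.hyps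
      by (auto simp: redex_def)
    then show ?thesis by auto
  next
    case (shift F' E' t')
    have "F = F' \<and> Reset v = Reset (plug E' (Shift t'))"
      using unique_decomp[of F F' "Reset v" "Reset (plug E' (Shift t'))"] shift reset.hyps
      by (auto simp: redex_def)
    then show ?thesis using shift reset.hyps by auto
  next
    case (reset F' v')
    have "F = F' \<and> Reset v = Reset v'"
      using unique_decomp[of F F' "Reset v" "Reset v'"] reset reset.hyps
      by (auto simp: redex_def)
    then show ?thesis using reset by auto
  qed
qed

fun cc :: "nat \<Rightarrow> ctx \<Rightarrow> bool" where
  "cc k Hole = True"
| "cc k (CAppR v E) = (closed_at k v \<and> cc k E)"
| "cc k (CAppL E t) = (cc k E \<and> closed_at k t)"
| "cc k (CReset E) = cc k E"

lemma cc0: "closed_ctx E = cc 0 E"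
  by (induction E) (auto simp: closed_def)

lemma closed_plug[simp]: "closed_at k (plug F u) = (cc k F \<and> closed_at k u)"
  by (induction F) auto

lemma closed_lift: "closed_at n s \<Longrightarrow> closed_at (Suc n) (lift k s)"
  by (induction s arbitrary: n k) auto

lemma closed_liftc: "cc n E \<Longrightarrow> cc (Suc n) (liftc k E)"
  by (induction E) (auto simp: closed_lift)

lemma closed_subst: "closed_at (Suc n) t \<Longrightarrow> k \<le> n \<Longrightarrow> closed_at n s \<Longrightarrow> closed_at n (subst t k s)"
  by (induction t arbitrary: n k s) (auto simp: closed_lift)

lemma step_closed: "step a b \<Longrightarrow> closed a \<Longrightarrow> closed b"
  unfolding closed_def
  by (induction rule: step.induct) (auto intro!: closed_subst closed_liftc)

lemma nf_steps: "steps a c \<Longrightarrow> is_value a \<or> stuck a \<Longrightarrow> c = a"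
  by (erule converse_rtranclpE) (auto simp: stuck_def dest: value_no_step)

lemma join_step: "steps a c \<Longrightarrow> step a a' \<Longrightarrow> a = c \<or> steps a' c"
  by (erule converse_rtranclpE) (auto dest: det)

lemma tclo_id: "tclo R a b \<Longrightarrow> R \<subseteq> Id \<Longrightarrow> a = b"
  by (induction rule: tclo.induct) auto

lemma hclo_id: "hclo R a b \<Longrightarrow> R \<subseteq> Id \<Longrightarrow> a = b"
  by (induction rule: hclo.induct) (auto simp: tilde_def dest: tclo_id)

definition EsX :: "(trm \<times> trm) set set" where
  "EsX = {E. E \<subseteq> Id \<and> is_env E}"

definition TX :: "((trm \<times> trm) set \<times> trm \<times> trm) set" where
  "TX = {(E, a, b). E \<in> EsX \<and> closed a \<and> closed b \<and> (\<exists>c. steps a c \<and> steps b c)}"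

lemma insert_EsX: "E \<in> EsX \<Longrightarrow> closed a \<Longrightarrow> is_value a \<or> stuck a \<Longrightarrow> insert (a, a) E \<in> EsX"
  unfolding EsX_def is_env_def by auto

lemma bisimX: "env_bisim EsX TX"
  unfolding env_bisim_def
proof (intro conjI ballI allI impI)
  show "env_relation EsX TX" unfolding env_relation_def EsX_def TX_def by auto
next
  fix x assume "x \<in> TX"
  then obtain E a b c where x: "x = (E, a, b)" and E: "E \<in> EsX" and ca: "closed a" and cb: "closed b"
    and ac: "steps a c" and bc: "steps b c" unfolding TX_def by auto
  have A: "\<forall>a'. step a a' \<longrightarrow> (\<exists>b'. steps b b' \<and> (E, a', b') \<in> TX)"
    if E: "E \<in> EsX" and ca: "closed a" and cb: "closed b" and ac: "steps a c" and bc: "steps b c"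
    for a b c
  proof (intro allI impI)
    fix a' assume st: "step a a'"
    have ca': "closed a'" using step_closed st ca by blast
    from join_step[OF ac st] show "\<exists>b'. steps b b' \<and> (E, a', b') \<in> TX"
    proof
      assume "a = c"
      then show ?thesis using bc E ca ca' st unfolding TX_def by (intro exI[of _ a]) auto
    next
      assume "steps a' c"
      then show ?thesis using E ca' cb bc unfolding TX_def by (intro exI[of _ b]) auto
    qed
  qed
  have B: "is_value a \<longrightarrow> (\<exists>v1. steps b v1 \<and> is_value v1 \<and> insert (a, v1) E \<in> EsX)"
    if E: "E \<in> EsX" and ca: "closed a" and ac: "steps a c" and bc: "steps b c"
    for a b c
    using nf_steps[OF ac] bc insert_EsX[OF E ca] by auto
  have C: "stuck a \<longrightarrow> (\<exists>t1'. steps b t1' \<and> stuck t1' \<and> insert (a, t1') E \<in> EsX)"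
    if E: "E \<in> EsX" and ca: "closed a" and ac: "steps a c" and bc: "steps b c"
    for a b c
    using nf_steps[OF ac] bc insert_EsX[OF E ca] by auto
  have A': "\<forall>b'. step b b' \<longrightarrow> (\<exists>a'. steps a a' \<and> (E, a', b') \<in> TX)"
    using A[OF E cb ca bc ac] unfolding TX_def by blast
  have B': "is_value b \<longrightarrow> (\<exists>v0. steps a v0 \<and> is_value v0 \<and> insert (v0, b) E \<in> EsX)"
    using nf_steps[OF bc] ac insert_EsX[OF E cb] by auto
  have C': "stuck b \<longrightarrow> (\<exists>t0'. steps a t0' \<and> stuck t0' \<and> insert (t0', b) E \<in> EsX)"
    using nf_steps[OF bc] ac insert_EsX[OF E cb] by auto
  show "case x of (E, t0, t1) \<Rightarrow>
          (\<forall>t0'. step t0 t0' \<longrightarrow> (\<exists>t1'. steps t1 t1' \<and> (E, t0', t1') \<in> TX)) \<and>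
          (is_value t0 \<longrightarrow> (\<exists>v1. steps t1 v1 \<and> is_value v1 \<and> insert (t0, v1) E \<in> EsX)) \<and>
          (stuck t0 \<longrightarrow> (\<exists>t1'. steps t1 t1' \<and> stuck t1' \<and> insert (t0, t1') E \<in> EsX)) \<and>
          (\<forall>t1'. step t1 t1' \<longrightarrow> (\<exists>t0'. steps t0 t0' \<and> (E, t0', t1') \<in> TX)) \<and>
          (is_value t1 \<longrightarrow> (\<exists>v0. steps t0 v0 \<and> is_value v0 \<and> insert (v0, t1) E \<in> EsX)) \<and>
          (stuck t1 \<longrightarrow> (\<exists>t0'. steps t0 t0' \<and> stuck t0' \<and> insert (t0', t1) E \<in> EsX))"
    using A[OF E ca cb ac bc] B[OF E ca ac bc] C[OF E ca ac bc] A' B' C' x by simp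
next
  fix E t0 t1 v0 v1
  assume E: "E \<in> EsX" and l: "(Lam t0, Lam t1) \<in> E" and v: "(v0, v1) \<in> tilde E"
  then have Eid: "E \<subseteq> Id" and Eenv: "is_env E" by (auto simp: EsX_def)
  have "t0 = t1" using l Eid by auto
  moreover have "v0 = v1" "closed v0" using v tclo_id Eid by (auto simp: tilde_def)
  moreover have "closed (Lam t0)" using l Eenv by (auto simp: is_env_def)
  ultimately show "(E, subst t0 0 v0, subst t1 0 v1) \<in> TX"
    using E unfolding TX_def closed_def by (auto intro!: closed_subst)
next
  fix E E0 E1 t0 t1 E0' E1'
  assume E: "E \<in> EsX" and p0: "is_pure E0" and p1: "is_pure E1"
    and s: "(plug E0 (Shift t0), plug E1 (Shift t1)) \<in> E"
    and h: "(E0', E1') \<in> hat E"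
  then have Eid: "E \<subseteq> Id" and Eenv: "is_env E" by (auto simp: EsX_def)
  have "E0 = E1 \<and> t0 = t1" using s Eid pure_unique[OF p0 p1] by auto
  moreover have "E0' = E1'" "closed_ctx E0'" using h hclo_id Eid by (auto simp: hat_def)
  moreover have "closed (plug E0 (Shift t0))" using s Eenv by (auto simp: is_env_def)
  ultimately show "(E, Reset (subst t0 0 (cont E0' E0)), Reset (subst t1 0 (cont E1' E1))) \<in> TX"
    using E unfolding TX_def closed_def cont_def cc0
    by (auto intro!: closed_subst closed_liftc)
qed

theorem lemma6:
  fixes t0 t0' :: trm
  assumes "closed t0" and "closed t0'" and "step t0 t0'"
  shows "approx_empty t0 t0'"
proof -
  have "({}, t0, t0') \<in> TX"
    using assms unfolding TX_def EsX_def is_env_def by auto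
  then show ?thesis
    using bisimX unfolding approx_empty_def approx_triples_def by blast
qed

end
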